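(* Let $(M,\mathrm{dist})$ be a compact metric space and $\phi$ a topological flow on $M$. Suppose $\mathrm{Sing}(\phi)$ is a finite set and every $p\in\mathrm{Sing}(\phi)$ is Lyapunov stable or Lyapunov unstable. Then $\phi$ has the oriented shadowing property if and only if $\phi$ has the standard shadowing property.
   Context: A topological flow on $M$ is a continuous map $\phi:\mathbb{R}\times M\to M$ with $\phi(0,x)=x$ and $\phi(s+t,x)=\phi(s,\phi(t,x))$ for all $s,t\in\mathbb{R}$, $x\in M$. $\mathrm{Sing}(\phi)=\{x\in M: \phi(t,x)=x\ \forall t\in\mathbb{R}\}$. A point $p\in\mathrm{Sing}(\phi)$ is Lyapunov stable if for every neighborhood $V$ of $p$ there is a neighborhood $U$ of $p$ with $\phi(t,x)\in V$ for all $t\ge 0$, $x\in U$; it is Lyapunov unstable if the same holds with $t\le 0$. A map $\xi:\mathbb{R}\to M$ is a $d$-pseudotrajectory of $\phi$ if $\mathrm{dist}(\xi(t+s),\phi(s,\xi(t)))<d$ for all $t\in\mathbb{R}$, $s\in[0,1]$. $\mathrm{Rep}$ denotes the set of orientation-preserving homeomorphisms $\mathbb{R}\to\mathbb{R}$, and for $\varepsilon>0$, $\mathrm{Rep}(\varepsilon)=\{f\in\mathrm{Rep}: |\frac{f(a)-f(b)}{a-b}-1|<\varepsilon \text{ for all } a>b\}$. $\phi$ has the standard shadowing property if for every $\varepsilon>0$ there is $d>0$ such that for every $d$-pseudotrajectory $\xi$ there are $x\in M$ and $h\in\mathrm{Rep}(\varepsilon)$ with $\mathrm{dist}(\xi(t),\phi(h(t),x))<\varepsilon$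 for all $t\in\mathbb{R}$. $\phi$ has the oriented shadowing property if the same holds with $h\in\mathrm{Rep}$ instead of $h\in\mathrm{Rep}(\varepsilon)$. *)

theory Defs
  imports "HOL-Analysis.Analysis"
begin

definition is_flow :: "(real \<Rightarrow> 'a::metric_space \<Rightarrow> 'a) \<Rightarrow> bool" where
  "is_flow \<phi> \<longleftrightarrow> continuous_on UNIV (\<lambda>(t, x). \<phi> t x)
     \<and> (\<forall>x. \<phi> 0 x = x) \<and> (\<forall>s t x. \<phi> (s + t) x = \<phi> s (\<phi> t x))"

definition Sing :: "(real \<Rightarrow> 'a \<Rightarrow> 'a) \<Rightarrow> 'a set" where
  "Sing \<phi> = {x. \<forall>t. \<phi> t x = x}"

definition nbhd :: "'a::topological_space set \<Rightarrow> 'a \<Rightarrow> bool" where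
  "nbhd V p \<longleftrightarrow> (\<exists>W. open W \<and> p \<in> W \<and> W \<subseteq> V)"

definition lyap_stable :: "(real \<Rightarrow> 'a::topological_space \<Rightarrow> 'a) \<Rightarrow> 'a \<Rightarrow> bool" where
  "lyap_stable \<phi> p \<longleftrightarrow> (\<forall>V. nbhd V p \<longrightarrow>
     (\<exists>U. nbhd U p \<and> (\<forall>t\<ge>0. \<forall>x\<in>U. \<phi> t x \<in> V)))"

definition lyap_unstable :: "(real \<Rightarrow> 'a::topological_space \<Rightarrow> 'a) \<Rightarrow> 'a \<Rightarrow> bool" where
  "lyap_unstable \<phi> p \<longleftrightarrow> (\<forall>V. nbhd V p \<longrightarrow>
     (\<exists>U. nbhd U p \<and> (\<forall>t\<le>0. \<forall>x\<in>U. \<phi> t x \<in> V)))"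

definition pseudo_traj :: "(real \<Rightarrow> 'a::metric_space \<Rightarrow> 'a) \<Rightarrow> real \<Rightarrow> (real \<Rightarrow> 'a) \<Rightarrow> bool" where
  "pseudo_traj \<phi> d \<xi> \<longleftrightarrow> (\<forall>t. \<forall>s\<in>{0..1}. dist (\<xi> (t + s)) (\<phi> s (\<xi> t)) < d)"

definition Rep :: "(real \<Rightarrow> real) set" where
  "Rep = {h. homeomorphism UNIV UNIV h (inv h) \<and> strict_mono h}"

definition Rep_eps :: "real \<Rightarrow> (real \<Rightarrow> real) set" where
  "Rep_eps \<epsilon> = {h \<in> Rep. \<forall>a b. a > b \<longrightarrow> \<bar>(h a - h b) / (a - b) - 1\<bar> < \<epsilon>}"

definition standard_shadowing :: "(real \<Rightarrow> 'a::metric_space \<Rightarrow> 'a) \<Rightarrow> bool" where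
  "standard_shadowing \<phi> \<longleftrightarrow> (\<forall>\<epsilon>>0. \<exists>d>0. \<forall>\<xi>. pseudo_traj \<phi> d \<xi> \<longrightarrow>
     (\<exists>x h. h \<in> Rep_eps \<epsilon> \<and> (\<forall>t. dist (\<xi> t) (\<phi> (h t) x) < \<epsilon>)))"

definition oriented_shadowing :: "(real \<Rightarrow> 'a::metric_space \<Rightarrow> 'a) \<Rightarrow> bool" where
  "oriented_shadowing \<phi> \<longleftrightarrow> (\<forall>\<epsilon>>0. \<exists>d>0. \<forall>\<xi>. pseudo_traj \<phi> d \<xi> \<longrightarrow>
     (\<exists>x h. h \<in> Rep \<and> (\<forall>t. dist (\<xi> t) (\<phi> (h t) x) < \<epsilon>)))"

end

theory Submission
  imports Defs
begin


lemma flow_zero: "is_flow \<phi> \<Longrightarrow> \<phi> 0 x = x" unfolding is_flow_def by auto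
lemma flow_add: "is_flow \<phi> \<Longrightarrow> \<phi> (s + t) x = \<phi> s (\<phi> t x)" unfolding is_flow_def by auto
lemma flow_cont: "is_flow \<phi> \<Longrightarrow> continuous_on UNIV (\<lambda>(t, x). \<phi> t x)" unfolding is_flow_def by auto

lemma flow_unif_time:
  fixes \<phi> :: "real \<Rightarrow> 'a::metric_space \<Rightarrow> 'a"
  assumes "compact (UNIV :: 'a set)" "is_flow \<phi>" "e > 0"
  shows "\<exists>a>0. \<forall>z \<tau>. \<bar>\<tau>\<bar> < a \<longrightarrow> dist (\<phi> \<tau> z) z < e"
proof -
  have "compact ({-1..1::real} \<times> (UNIV::'a set))" using assms(1) by (intro compact_Times) auto
  moreover have "continuous_on ({-1..1::real} \<times> (UNIV::'a set)) (\<lambda>(t, x). \<phi> t x)"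
    using flow_cont[OF assms(2)] by (rule continuous_on_subset) auto
  ultimately have "uniformly_continuous_on ({-1..1::real} \<times> (UNIV::'a set)) (\<lambda>(t, x). \<phi> t x)"
    by (rule compact_uniformly_continuous[rotated])
  then obtain d where d: "d > 0" and
    H: "\<forall>x\<in>{-1..1::real} \<times> (UNIV::'a set). \<forall>x'\<in>{-1..1::real} \<times> (UNIV::'a set). dist x' x < d \<longrightarrow> dist ((\<lambda>(t, x). \<phi> t x) x') ((\<lambda>(t, x). \<phi> t x) x) < e"
    unfolding uniformly_continuous_on_def using assms(3) by blast
  show ?thesis
  proof (intro exI[of _ "min d 1"] conjI allI impI)
    fix z and \<tau> :: real assume "\<bar>\<tau>\<bar> < min d 1"
    then have "dist (\<tau>, z) (0, z) < d" "(\<tau>, z) \<in> {-1..1::real} \<times> (UNIV::'a set)"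
      by (auto simp: dist_Pair_Pair dist_real_def)
    with H have "dist (\<phi> \<tau> z) (\<phi> 0 z) < e" by fastforce
    then show "dist (\<phi> \<tau> z) z < e" using flow_zero[OF assms(2)] by simp
  qed (use d in auto)
qed

lemma flow_unif_space:
  fixes \<phi> :: "real \<Rightarrow> 'a::metric_space \<Rightarrow> 'a"
  assumes "compact (UNIV :: 'a set)" "is_flow \<phi>" "e > 0"
  shows "\<exists>d>0. \<forall>s\<in>{0..1}. \<forall>p q. dist p q < d \<longrightarrow> dist (\<phi> s p) (\<phi> s q) < e"
proof -
  have "compact ({0..1::real} \<times> (UNIV::'a set))" using assms(1) by (intro compact_Times) auto
  moreover have "continuous_on ({0..1::real} \<times> (UNIV::'a set)) (\<lambda>(t, x). \<phi> t x)"
    using flow_cont[OF assms(2)] by (rule continuous_on_subset) auto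
  ultimately have "uniformly_continuous_on ({0..1::real} \<times> (UNIV::'a set)) (\<lambda>(t, x). \<phi> t x)"
    by (rule compact_uniformly_continuous[rotated])
  then obtain d where d: "d > 0" and
    H: "\<forall>x\<in>{0..1::real} \<times> (UNIV::'a set). \<forall>x'\<in>{0..1::real} \<times> (UNIV::'a set). dist x' x < d \<longrightarrow> dist ((\<lambda>(t, x). \<phi> t x) x') ((\<lambda>(t, x). \<phi> t x) x) < e"
    unfolding uniformly_continuous_on_def using assms(3) by blast
  show ?thesis
  proof (intro exI[of _ d] conjI ballI allI impI)
    fix s :: real and p q :: 'a assume "s \<in> {0..1}" "dist p q < d"
    then have "dist (s, p) (s, q) < d" "(s, p) \<in> {0..1::real} \<times> (UNIV::'a set)" "(s, q) \<in> {0..1::real} \<times> (UNIV::'a set)"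
      by (auto simp: dist_Pair_Pair)
    with H show "dist (\<phi> s p) (\<phi> s q) < e" by fastforce
  qed (use d in auto)
qed

definition pl :: "(int \<Rightarrow> real) \<Rightarrow> real \<Rightarrow> real" where
  "pl v t = v \<lfloor>t\<rfloor> + (t - of_int \<lfloor>t\<rfloor>) * (v (\<lfloor>t\<rfloor> + 1) - v \<lfloor>t\<rfloor>)"

lemma int_mono_strict:
  fixes w :: "int \<Rightarrow> real"
  assumes "\<And>k. w k < w (k + 1)" "k < (l::int)"
  shows "w k < w l"
  using assms(2)
proof (induction l rule: int_gr_induct)
  case base then show ?case using assms(1) by simp
next
  case (step i) then show ?case using assms(1)[of i] by (meson order.strict_trans)
qed

lemma pl_strict_mono:
  assumes "\<And>k. w k < w (k + 1)" "b < a"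
  shows "pl w b < pl w a"
proof (cases "\<lfloor>a\<rfloor> = \<lfloor>b\<rfloor>")
  case True
  have "pl w a - pl w b = (a - b) * (w (\<lfloor>b\<rfloor> + 1) - w \<lfloor>b\<rfloor>)"
    unfolding pl_def True by (simp add: algebra_simps)
  moreover have "0 < (a - b) * (w (\<lfloor>b\<rfloor> + 1) - w \<lfloor>b\<rfloor>)"
    using assms(1)[of "\<lfloor>b\<rfloor>"] assms(2) by simp
  ultimately show ?thesis by simp
next
  case False
  then have lt: "\<lfloor>b\<rfloor> + 1 \<le> \<lfloor>a\<rfloor>" using assms(2) floor_mono[of b a] by linarith
  have f1: "b - of_int \<lfloor>b\<rfloor> < 1" "0 \<le> b - of_int \<lfloor>b\<rfloor>" by linarith+
  have d: "0 < w (\<lfloor>b\<rfloor> + 1) - w \<lfloor>b\<rfloor>" using assms(1)[of "\<lfloor>b\<rfloor>"] by simp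
  have "pl w b < w (\<lfloor>b\<rfloor> + 1)"
  proof -
    have "(b - of_int \<lfloor>b\<rfloor>) * (w (\<lfloor>b\<rfloor> + 1) - w \<lfloor>b\<rfloor>) < 1 * (w (\<lfloor>b\<rfloor> + 1) - w \<lfloor>b\<rfloor>)"
      using f1 d by (intro mult_strict_right_mono) auto
    then show ?thesis unfolding pl_def by simp
  qed
  also have "w (\<lfloor>b\<rfloor> + 1) \<le> w \<lfloor>a\<rfloor>"
    using lt int_mono_strict[of w "\<lfloor>b\<rfloor> + 1" "\<lfloor>a\<rfloor>", OF assms(1)] by (cases "\<lfloor>b\<rfloor> + 1 = \<lfloor>a\<rfloor>") auto
  also have "w \<lfloor>a\<rfloor> \<le> pl w a"
  proof -
    have "0 \<le> (a - of_int \<lfloor>a\<rfloor>) * (w (\<lfloor>a\<rfloor> + 1) - w \<lfloor>a\<rfloor>)"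
      using assms(1)[of "\<lfloor>a\<rfloor>"] by (intro mult_nonneg_nonneg) linarith+
    then show ?thesis unfolding pl_def by simp
  qed
  finally show ?thesis .
qed

lemma pl_lower:
  assumes "\<And>k. m < v (k + 1) - v k" "b < a"
  shows "m * (a - b) < pl v a - pl v b"
proof -
  define w where "w k = v k - m * of_int k" for k
  have pw: "pl w t = pl v t - m * t" for t
    unfolding pl_def w_def by (simp add: algebra_simps)
  have "pl w b < pl w a"
    by (rule pl_strict_mono) (use assms in \<open>auto simp: w_def algebra_simps\<close>)
  then show ?thesis unfolding pw by (simp add: algebra_simps)
qed

lemma pl_upper:
  assumes "\<And>k. v (k + 1) - v k < M" "b < a"
  shows "pl v a - pl v b < M * (a - b)"
proof -
  have "(-M) * (a - b) < pl (\<lambda>k. - v k) a - pl (\<lambda>k. - v k) b"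
  proof (rule pl_lower)
    fix k show "- M < - v (k+1) - - v k" using assms(1)[of k] by simp
  qed (rule assms(2))
  moreover have "pl (\<lambda>k. - v k) t = - pl v t" for t unfolding pl_def by (simp add: algebra_simps)
  ultimately show ?thesis by simp
qed

lemma pl_int: "pl v (of_int k) = v k" unfolding pl_def by simp

lemma slope_rep:
  fixes f :: "real \<Rightarrow> real"
  assumes m: "0 < m" and lo: "\<And>a b. b < a \<Longrightarrow> m * (a - b) < f a - f b"
    and up: "\<And>a b. b < a \<Longrightarrow> f a - f b < M * (a - b)"
  shows "f \<in> Rep"
proof -
  have sm: "strict_mono f"
  proof (rule strict_monoI)
    fix b a :: real assume "b < a"
    then have "0 < m * (a - b)" using m by simp
    with lo[OF \<open>b < a\<close>] show "f b < f a" by simp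
  qed
  have M: "0 < M" using lo[where a=1 and b=0] up[where a=1 and b=0] m by simp
  have lip: "\<bar>f a - f b\<bar> \<le> M * \<bar>a - b\<bar>" for a b
  proof (cases a b rule: linorder_cases)
    case less
    have "0 < m * (b - a)" using m less by simp
    then have "f a < f b" using lo[OF less] by linarith
    then have "\<bar>f a - f b\<bar> = f b - f a" "\<bar>a - b\<bar> = b - a" using less by auto
    then show ?thesis using up[OF less] by simp
  next
    case greater
    have "0 < m * (a - b)" using m greater by simp
    then have "f b < f a" using lo[OF greater] by linarith
    then have "\<bar>f a - f b\<bar> = f a - f b" "\<bar>a - b\<bar> = a - b" using greater by auto
    then show ?thesis using up[OF greater] by simp
  qed simp
  have lipi: "m * \<bar>a - b\<bar> \<le> \<bar>f a - f b\<bar>" for a b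
  proof (cases a b rule: linorder_cases)
    case less
    have "0 < m * (b - a)" using m less by simp
    then have "f a < f b" using lo[OF less] by linarith
    then have "\<bar>f a - f b\<bar> = f b - f a" "\<bar>a - b\<bar> = b - a" using less by auto
    then show ?thesis using lo[OF less] by simp
  next
    case greater
    have "0 < m * (a - b)" using m greater by simp
    then have "f b < f a" using lo[OF greater] by linarith
    then have "\<bar>f a - f b\<bar> = f a - f b" "\<bar>a - b\<bar> = a - b" using greater by auto
    then show ?thesis using lo[OF greater] by simp
  qed simp
  have cont: "continuous_on UNIV f"
    unfolding continuous_on_iff
  proof (intro ballI allI impI)
    fix x :: real and e :: real assume "e > 0"
    show "\<exists>d>0. \<forall>x'\<in>UNIV. dist x' x < d \<longrightarrow> dist (f x') (f x) < e"
    proof (intro exI[of _ "e / M"] conjI ballI impI)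
      fix x' assume "dist x' x < e / M"
      then have "M * \<bar>x' - x\<bar> < e" using M by (simp add: dist_real_def field_simps)
      then show "dist (f x') (f x) < e" using lip[of x' x] by (simp add: dist_real_def)
    qed (use \<open>e > 0\<close> M in auto)
  qed
  have surj: "\<exists>t. f t = y" for y
  proof -
    define T where "T = \<bar>y - f 0\<bar> / m + 1"
    have T: "T > 0" "m * T > \<bar>y - f 0\<bar>" using m by (auto simp: T_def field_simps)
    have "f (-T) < y" using lo[where a=0 and b="-T"] T by simp
    moreover have "y < f T" using lo[where a=T and b=0] T by simp
    ultimately show ?thesis
      using IVT'[of f "-T" y T] continuous_on_subset[OF cont] T by force
  qed
  then have su: "surj f" by (metis surjI)
  have inj: "inj f" using sm strict_mono_imp_inj_on by blast
  have contg: "continuous_on UNIV (inv f)"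
    unfolding continuous_on_iff
  proof (intro ballI allI impI)
    fix x :: real and e :: real assume "e > 0"
    show "\<exists>d>0. \<forall>x'\<in>UNIV. dist x' x < d \<longrightarrow> dist (inv f x') (inv f x) < e"
    proof (intro exI[of _ "e * m"] conjI ballI impI)
      fix x' assume a: "dist x' x < e * m"
      have "m * \<bar>inv f x' - inv f x\<bar> \<le> \<bar>f (inv f x') - f (inv f x)\<bar>" by (rule lipi)
      also have "\<dots> = \<bar>x' - x\<bar>" using su by (simp add: surj_f_inv_f)
      finally have "m * \<bar>inv f x' - inv f x\<bar> < e * m" using a by (simp add: dist_real_def)
      then show "dist (inv f x') (inv f x) < e" using m by (simp add: dist_real_def mult.commute)
    qed (use \<open>e > 0\<close> m in auto)
  qed
  have "homeomorphism UNIV UNIV f (inv f)"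
    by (rule homeomorphismI[OF cont contg]) (auto simp: inv_f_f[OF inj] surj_f_inv_f[OF su])
  then show ?thesis unfolding Rep_def using sm by simp
qed

lemma rep_props:
  assumes "h \<in> Rep"
  shows "continuous_on UNIV h" "strict_mono h" "surj h"
  using assms unfolding Rep_def homeomorphism_def by auto

lemma slope_rep_eps:
  fixes f :: "real \<Rightarrow> real"
  assumes c: "0 < c" "c < 1" "c \<le> \<epsilon>"
    and lo: "\<And>a b. b < a \<Longrightarrow> (1 - c) * (a - b) < f a - f b"
    and up: "\<And>a b. b < a \<Longrightarrow> f a - f b < (1 + c) * (a - b)"
  shows "f \<in> Rep_eps \<epsilon>"
proof -
  have "f \<in> Rep" by (rule slope_rep[OF _ lo up]) (use c in auto)
  moreover have "\<bar>(f a - f b) / (a - b) - 1\<bar> < \<epsilon>" if "a > b" for a b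
  proof -
    have "(1 - c) < (f a - f b) / (a - b)" using lo[OF that] that by (simp add: field_simps)
    moreover have "(f a - f b) / (a - b) < 1 + c" using up[OF that] that by (simp add: field_simps)
    ultimately show ?thesis using c by linarith
  qed
  ultimately show ?thesis unfolding Rep_eps_def by auto
qed

lemma id_rep_eps: "\<epsilon> > 0 \<Longrightarrow> (\<lambda>t. t) \<in> Rep_eps \<epsilon>"
proof (rule slope_rep_eps[where c = "min \<epsilon> (1/2)"])
  fix a b :: real assume "b < a" "\<epsilon> > 0"
  then have "0 < min \<epsilon> (1/2) * (a - b)" by simp
  then show "(1 - min \<epsilon> (1/2)) * (a - b) < a - b" "a - b < (1 + min \<epsilon> (1/2)) * (a - b)"
    by (simp_all add: left_diff_distrib distrib_right)
qed auto

lemma finite_radius: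
  fixes P :: "'b \<Rightarrow> real \<Rightarrow> bool"
  assumes "finite A" "\<forall>a\<in>A. \<exists>r>0. \<forall>r'. 0 < r' \<and> r' \<le> r \<longrightarrow> P a r'"
  shows "\<exists>r>0. \<forall>a\<in>A. P a r"
proof -
  have "\<exists>r>0. \<forall>a\<in>A. \<forall>r'. 0 < r' \<and> r' \<le> r \<longrightarrow> P a r'"
    using assms
  proof (induction A rule: finite_induct)
    case empty then show ?case by (auto intro: exI[of _ 1])
  next
    case (insert x F)
    then obtain r1 where r1: "r1 > 0" "\<forall>a\<in>F. \<forall>r'. 0 < r' \<and> r' \<le> r1 \<longrightarrow> P a r'" by auto
    obtain r2 where r2: "r2 > 0" "\<forall>r'. 0 < r' \<and> r' \<le> r2 \<longrightarrow> P x r'" using insert.prems by auto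
    show ?case using r1 r2 by (intro exI[of _ "min r1 r2"]) auto
  qed
  then obtain r where "r > 0" "\<forall>a\<in>A. \<forall>r'. 0 < r' \<and> r' \<le> r \<longrightarrow> P a r'" by blast
  then show ?thesis by auto
qed

lemma finite_bound:
  fixes Q :: "'b \<Rightarrow> real \<Rightarrow> bool"
  assumes "finite A" "\<forall>a\<in>A. \<exists>b. \<forall>b'. b \<le> b' \<longrightarrow> Q a b'"
  shows "\<exists>b. \<forall>a\<in>A. Q a b"
proof -
  have "\<exists>b. \<forall>a\<in>A. \<forall>b'. b \<le> b' \<longrightarrow> Q a b'"
    using assms
  proof (induction A rule: finite_induct)
    case empty then show ?case by auto
  next
    case (insert x F)
    then obtain r1 where r1: "\<forall>a\<in>F. \<forall>r'. r1 \<le> r' \<longrightarrow> Q a r'" by auto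
    obtain r2 where r2: "\<forall>r'. r2 \<le> r' \<longrightarrow> Q x r'" using insert.prems by auto
    show ?case using r1 r2 by (intro exI[of _ "max r1 r2"]) auto
  qed
  then obtain r where "\<forall>a\<in>A. \<forall>b'. r \<le> b' \<longrightarrow> Q a b'" by blast
  then show ?thesis by auto
qed

lemma flow_periodic_int:
  assumes "is_flow \<phi>" "\<phi> \<sigma> w = w"
  shows "\<phi> (of_int k * \<sigma>) w = w"
proof -
  have nat: "\<phi> (of_nat n * \<sigma>) w = w" for n
  proof (induction n)
    case 0 then show ?case using flow_zero[OF assms(1)] by simp
  next
    case (Suc n)
    have "\<phi> (of_nat (Suc n) * \<sigma>) w = \<phi> (\<sigma> + of_nat n * \<sigma>) w" by (simp add: algebra_simps)
    also have "\<dots> = w" using flow_add[OF assms(1)] Suc assms(2) by simp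
    finally show ?case .
  qed
  have neg: "\<phi> (- (of_nat n * \<sigma>)) w = w" for n
  proof -
    have "\<phi> (- (of_nat n * \<sigma>)) w = \<phi> (- (of_nat n * \<sigma>)) (\<phi> (of_nat n * \<sigma>) w)" using nat by simp
    also have "\<dots> = \<phi> 0 w" using flow_add[OF assms(1), symmetric, of "- (of_nat n * \<sigma>)"] by simp
    finally show ?thesis using flow_zero[OF assms(1)] by simp
  qed
  show ?thesis
  proof (cases "k \<ge> 0")
    case True then obtain n where "k = int n" by (metis nonneg_int_cases)
    then show ?thesis using nat by simp
  next
    case False then have "k = - int (nat (-k))" by simp
    then show ?thesis using neg[of "nat (-k)"] by (metis mult_minus_left of_int_minus of_int_of_nat_eq)
  qed
qed

lemma flow_isCont: "is_flow \<phi> \<Longrightarrow> isCont (\<lambda>(t, x). \<phi> t x) p"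
  using flow_cont[of \<phi>] by (cases p) (simp add: continuous_on_eq_continuous_at)

lemma nonreturn:
  fixes \<phi> :: "real \<Rightarrow> 'a::metric_space \<Rightarrow> 'a"
  assumes K: "compact K" and fl: "is_flow \<phi>" and ns: "\<forall>z\<in>K. \<exists>t. \<phi> t z \<noteq> z"
  shows "\<exists>P>0. \<forall>z\<in>K. \<forall>\<tau>. 0 < \<tau> \<and> \<tau> \<le> P \<longrightarrow> \<phi> \<tau> z \<noteq> z"
proof (rule ccontr)
  assume "\<not> ?thesis"
  then have "\<forall>n::nat. \<exists>z. z \<in> K \<and> (\<exists>\<tau>. 0 < \<tau> \<and> \<tau> \<le> inverse (real (Suc n)) \<and> \<phi> \<tau> z = z)"
    by (metis inverse_positive_iff_positive of_nat_0_less_iff zero_less_Suc)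
  then obtain zs \<tau>s where zs: "\<And>n. zs n \<in> K" and ts: "\<And>n. 0 < \<tau>s n" "\<And>n. \<tau>s n \<le> inverse (real (Suc n))"
    and per: "\<And>n. \<phi> (\<tau>s n) (zs n) = zs n"
    by metis
  obtain l r where l: "l \<in> K" and r: "strict_mono r" and lim: "(zs \<circ> r) \<longlonglongrightarrow> l"
    using compact_imp_seq_compact[OF K] zs by (metis seq_compactE)
  define w where "w n = zs (r n)" for n
  define \<sigma> where "\<sigma> n = \<tau>s (r n)" for n
  have wl: "w \<longlonglongrightarrow> l" unfolding w_def using lim by (simp add: comp_def)
  have \<sigma>0: "\<sigma> \<longlonglongrightarrow> 0"
  proof (rule tendsto_sandwich[of "\<lambda>n. 0" _ _ "\<lambda>n. inverse (real (Suc n))"])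
    show "\<forall>\<^sub>F n in sequentially. 0 \<le> \<sigma> n" using ts(1) by (auto simp: \<sigma>_def less_imp_le)
    have "\<sigma> n \<le> inverse (real (Suc n))" for n
    proof -
      have "n \<le> r n" using r by (rule seq_suble)
      then have "inverse (real (Suc (r n))) \<le> inverse (real (Suc n))"
        by (intro le_imp_inverse_le) auto
      then show ?thesis using ts(2)[of "r n"] unfolding \<sigma>_def by linarith
    qed
    then show "\<forall>\<^sub>F n in sequentially. \<sigma> n \<le> inverse (real (Suc n))" by auto
  qed (simp, rule LIMSEQ_inverse_real_of_nat)
  have wper: "\<phi> (\<sigma> n) (w n) = w n" for n using per by (simp add: w_def \<sigma>_def)
  have "\<phi> t l = l" for t
  proof -
    define k where "k n = \<lfloor>t / \<sigma> n\<rfloor>" for n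
    define \<rho> where "\<rho> n = t - of_int (k n) * \<sigma> n" for n
    have \<sigma>pos: "\<sigma> n > 0" for n using ts(1) by (simp add: \<sigma>_def)
    have \<rho>b: "0 \<le> \<rho> n \<and> \<rho> n \<le> \<sigma> n" for n
    proof -
      have "of_int (k n) \<le> t / \<sigma> n" "t / \<sigma> n < of_int (k n) + 1" unfolding k_def by linarith+
      then have "of_int (k n) * \<sigma> n \<le> t" "t < (of_int (k n) + 1) * \<sigma> n"
        using \<sigma>pos[of n] by (simp_all add: field_simps)
      then show ?thesis unfolding \<rho>_def by (simp add: algebra_simps)
    qed
    have \<rho>0: "\<rho> \<longlonglongrightarrow> 0"
      by (rule tendsto_sandwich[of "\<lambda>n. 0" _ _ \<sigma>]) (use \<rho>b \<sigma>0 in auto)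
    have eq: "\<phi> t (w n) = \<phi> (\<rho> n) (w n)" for n
    proof -
      have "\<phi> t (w n) = \<phi> (\<rho> n + of_int (k n) * \<sigma> n) (w n)" by (simp add: \<rho>_def)
      also have "\<dots> = \<phi> (\<rho> n) (\<phi> (of_int (k n) * \<sigma> n) (w n))" by (rule flow_add[OF fl])
      also have "\<dots> = \<phi> (\<rho> n) (w n)" using flow_periodic_int[OF fl wper] by simp
      finally show ?thesis .
    qed
    have c1: "(\<lambda>n. (\<lambda>(t, x). \<phi> t x) (t, w n)) \<longlonglongrightarrow> (\<lambda>(t, x). \<phi> t x) (t, l)"
      by (rule isCont_tendsto_compose[OF flow_isCont[OF fl]]) (intro tendsto_Pair tendsto_const wl)
    have c2: "(\<lambda>n. (\<lambda>(t, x). \<phi> t x) (\<rho> n, w n)) \<longlonglongrightarrow> (\<lambda>(t, x). \<phi> t x) (0, l)"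
      by (rule isCont_tendsto_compose[OF flow_isCont[OF fl]]) (intro tendsto_Pair \<rho>0 wl)
    have "(\<lambda>n. \<phi> t (w n)) \<longlonglongrightarrow> \<phi> t l" using c1 by simp
    moreover have "(\<lambda>n. \<phi> t (w n)) \<longlonglongrightarrow> l" using c2 flow_zero[OF fl, of l] by (simp add: eq)
    ultimately show ?thesis by (rule LIMSEQ_unique)
  qed
  then show False using ns l by auto
qed

lemma flow_cont_x: "is_flow \<phi> \<Longrightarrow> continuous_on UNIV (\<phi> t)"
proof -
  assume fl: "is_flow \<phi>"
  have "continuous_on UNIV ((\<lambda>(t, x). \<phi> t x) \<circ> (\<lambda>z. (t, z)))"
    by (rule continuous_on_compose) (auto intro!: continuous_intros continuous_on_subset[OF flow_cont[OF fl]])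
  then show ?thesis by (simp add: comp_def)
qed

lemma flow_cont_t: "is_flow \<phi> \<Longrightarrow> continuous_on UNIV f \<Longrightarrow> continuous_on UNIV (\<lambda>t. \<phi> (f t) x)"
proof -
  assume fl: "is_flow \<phi>" and f: "continuous_on UNIV f"
  have "continuous_on UNIV ((\<lambda>(t, x). \<phi> t x) \<circ> (\<lambda>z. (f z, x)))"
    by (rule continuous_on_compose) (auto intro!: continuous_intros f continuous_on_subset[OF flow_cont[OF fl]])
  then show ?thesis by (simp add: comp_def)
qed



lemma oriented_imp_standard:
  fixes \<phi> :: "real \<Rightarrow> 'a::metric_space \<Rightarrow> 'a"
  assumes cpt: "compact (UNIV :: 'a set)"
    and fl: "is_flow \<phi>"
    and fin: "finite (Sing \<phi>)"
    and ls: "\<forall>p\<in>Sing \<phi>. lyap_stable \<phi> p \<or> lyap_unstable \<phi> p"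
    and os: "oriented_shadowing \<phi>"
  shows "standard_shadowing \<phi>"
  unfolding standard_shadowing_def
proof (intro allI impI)
  fix \<epsilon> :: real assume \<epsilon>: "\<epsilon> > 0"
  define S where "S = Sing \<phi>"
  define S1 where "S1 = {p \<in> S. lyap_stable \<phi> p}"
  define S2 where "S2 = S - S1"
  have S2u: "lyap_unstable \<phi> p" if "p \<in> S2" for p using ls that by (auto simp: S2_def S1_def S_def)
  have S1s: "lyap_stable \<phi> p" if "p \<in> S1" for p using that by (auto simp: S1_def)
  have singS: "\<phi> t p = p" if "p \<in> S" for p t using that by (auto simp: S_def Sing_def)
  have finS: "finite S" using fin by (simp add: S_def)
  obtain \<eta> where \<eta>: "\<eta> > 0" "\<eta> \<le> \<epsilon> / 8" and sep: "\<And>p q. p \<in> S \<Longrightarrow> q \<in> S \<Longrightarrow> p \<noteq> q \<Longrightarrow> 2 * \<eta> \<le> dist p q"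
  proof -
    have "\<exists>r>0. \<forall>pq\<in>S \<times> S. r \<le> \<epsilon> / 8 \<and> (fst pq \<noteq> snd pq \<longrightarrow> 2 * r \<le> dist (fst pq) (snd pq))"
    proof (rule finite_radius)
      show "finite (S \<times> S)" using finS by simp
      show "\<forall>pq\<in>S \<times> S. \<exists>r>0. \<forall>r'. 0 < r' \<and> r' \<le> r \<longrightarrow> r' \<le> \<epsilon> / 8 \<and> (fst pq \<noteq> snd pq \<longrightarrow> 2 * r' \<le> dist (fst pq) (snd pq))"
      proof
        fix pq assume "pq \<in> S \<times> S"
        show "\<exists>r>0. \<forall>r'. 0 < r' \<and> r' \<le> r \<longrightarrow> r' \<le> \<epsilon> / 8 \<and> (fst pq \<noteq> snd pq \<longrightarrow> 2 * r' \<le> dist (fst pq) (snd pq))"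
        proof (cases "fst pq = snd pq")
          case True then show ?thesis using \<epsilon> by (intro exI[of _ "\<epsilon> / 8"]) auto
        next
          case False
          then have "dist (fst pq) (snd pq) > 0" by simp
          then show ?thesis using \<epsilon> by (intro exI[of _ "min (\<epsilon> / 8) (dist (fst pq) (snd pq) / 2)"]) auto
        qed
      qed
    qed
    then obtain r where r: "r > 0" "\<forall>pq\<in>S \<times> S. r \<le> \<epsilon> / 8 \<and> (fst pq \<noteq> snd pq \<longrightarrow> 2 * r \<le> dist (fst pq) (snd pq))" by blast
    show ?thesis
    proof (rule that[of "min r (\<epsilon>/8)"])
      fix p q assume pq: "p \<in> S" "q \<in> S" "p \<noteq> q"
      then have "2 * r \<le> dist p q" using bspec[OF r(2), of "(p, q)"] by auto
      then show "2 * min r (\<epsilon>/8) \<le> dist p q" by linarith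
    qed (use r \<epsilon> in auto)
  qed
  obtain \<rho> where \<rho>: "\<rho> > 0"
    and stab: "\<And>p w t. p \<in> S1 \<Longrightarrow> dist p w < \<rho> \<Longrightarrow> t \<ge> 0 \<Longrightarrow> dist p (\<phi> t w) < \<eta>"
    and unst: "\<And>p w t. p \<in> S2 \<Longrightarrow> dist p w < \<rho> \<Longrightarrow> t \<le> 0 \<Longrightarrow> dist p (\<phi> t w) < \<eta>"
  proof -
    have "\<exists>r>0. \<forall>p\<in>S. (p \<in> S1 \<longrightarrow> (\<forall>w t. dist p w < r \<longrightarrow> t \<ge> 0 \<longrightarrow> dist p (\<phi> t w) < \<eta>))
                   \<and> (p \<in> S2 \<longrightarrow> (\<forall>w t. dist p w < r \<longrightarrow> t \<le> 0 \<longrightarrow> dist p (\<phi> t w) < \<eta>))"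
    proof (rule finite_radius[OF finS], rule ballI)
      fix p assume pS: "p \<in> S"
      have nb: "nbhd (ball p \<eta>) p" unfolding nbhd_def using \<eta> by (intro exI[of _ "ball p \<eta>"]) auto
      show "\<exists>r>0. \<forall>r'. 0 < r' \<and> r' \<le> r \<longrightarrow> (p \<in> S1 \<longrightarrow> (\<forall>w t. dist p w < r' \<longrightarrow> t \<ge> 0 \<longrightarrow> dist p (\<phi> t w) < \<eta>))
                   \<and> (p \<in> S2 \<longrightarrow> (\<forall>w t. dist p w < r' \<longrightarrow> t \<le> 0 \<longrightarrow> dist p (\<phi> t w) < \<eta>))"
      proof (cases "p \<in> S1")
        case True
        then obtain U where U: "nbhd U p" "\<forall>t\<ge>0. \<forall>x\<in>U. \<phi> t x \<in> ball p \<eta>"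
          using S1s[OF True] nb unfolding lyap_stable_def by blast
        then obtain W where W: "open W" "p \<in> W" "W \<subseteq> U" unfolding nbhd_def by blast
        then obtain r where r: "r > 0" "ball p r \<subseteq> W" using open_contains_ball by blast
        show ?thesis using r W U True by (intro exI[of _ r]) (auto simp: S2_def subset_iff)
      next
        case False
        then have "p \<in> S2" using pS by (simp add: S2_def)
        then obtain U where U: "nbhd U p" "\<forall>t\<le>0. \<forall>x\<in>U. \<phi> t x \<in> ball p \<eta>"
          using S2u nb unfolding lyap_unstable_def by blast
        then obtain W where W: "open W" "p \<in> W" "W \<subseteq> U" unfolding nbhd_def by blast
        then obtain r where r: "r > 0" "ball p r \<subseteq> W" using open_contains_ball by blast
        show ?thesis using r W U False by (intro exI[of _ r]) (auto simp: subset_iff)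
      qed
    qed
    then obtain r where "r > 0" "\<forall>p\<in>S. (p \<in> S1 \<longrightarrow> (\<forall>w t. dist p w < r \<longrightarrow> t \<ge> 0 \<longrightarrow> dist p (\<phi> t w) < \<eta>))
                   \<and> (p \<in> S2 \<longrightarrow> (\<forall>w t. dist p w < r \<longrightarrow> t \<le> 0 \<longrightarrow> dist p (\<phi> t w) < \<eta>))" by blast
    then show ?thesis using that[of r] by (auto simp: S1_def S2_def)
  qed
  obtain a0 where a0: "a0 > 0" "\<And>z \<tau>. \<bar>\<tau>\<bar> < a0 \<Longrightarrow> dist (\<phi> \<tau> z) z < \<epsilon> / 4"
    using flow_unif_time[OF cpt fl, of "\<epsilon> / 4"] \<epsilon> by auto
  define K where "K = {z. \<forall>p\<in>S. \<rho> / 2 \<le> dist p z}"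
  have Keq: "K = (\<Inter>p\<in>S. {z. \<rho> / 2 \<le> dist p z})" by (auto simp: K_def)
  have "closed K" unfolding Keq
    by (intro closed_INT ballI closed_Collect_le continuous_intros)
  then have Kc: "compact K" using cpt compact_Int_closed[of UNIV K] by simp
  have Kns: "\<forall>z\<in>K. \<exists>t. \<phi> t z \<noteq> z"
  proof
    fix z assume "z \<in> K"
    then have "z \<notin> S" using \<rho> by (force simp: K_def)
    then show "\<exists>t. \<phi> t z \<noteq> z" by (auto simp: S_def Sing_def)
  qed
  obtain P where P: "P > 0" "\<And>z \<tau>. z \<in> K \<Longrightarrow> 0 < \<tau> \<Longrightarrow> \<tau> \<le> P \<Longrightarrow> \<phi> \<tau> z \<noteq> z"
    using nonreturn[OF Kc fl Kns] by blast
  define a where "a = min (a0 / 2) (min P (min (1/2) (\<epsilon> / 2)))"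
  have a: "0 < a" "a \<le> P" "a < 1" "a < \<epsilon>" "2 * a \<le> a0" "a \<le> a0"
    using a0(1) P(1) \<epsilon> by (auto simp: a_def min_def)
  obtain \<delta>0 where \<delta>0: "\<delta>0 > 0" "\<And>z. z \<in> K \<Longrightarrow> \<delta>0 \<le> dist (\<phi> a z) z \<and> \<delta>0 \<le> dist (\<phi> (-a) z) z"
  proof (cases "K = {}")
    case True then show ?thesis using that[of 1] by auto
  next
    case False
    define gg where "gg z = min (dist (\<phi> a z) z) (dist (\<phi> (-a) z) z)" for z
    have "continuous_on K gg" unfolding gg_def
      by (intro continuous_intros continuous_on_subset[OF flow_cont_x[OF fl]]) auto
    then obtain z0 where z0: "z0 \<in> K" "\<And>z. z \<in> K \<Longrightarrow> gg z0 \<le> gg z"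
      using continuous_attains_inf[OF Kc False] by blast
    have n1: "\<phi> a z0 \<noteq> z0" using P(2)[OF z0(1)] a by auto
    have n2: "\<phi> (-a) z0 \<noteq> z0"
    proof
      assume "\<phi> (-a) z0 = z0"
      then have "\<phi> a z0 = \<phi> a (\<phi> (-a) z0)" by simp
      also have "\<dots> = z0" using flow_add[OF fl, of a "-a" z0, symmetric] flow_zero[OF fl] by simp
      finally show False using n1 by simp
    qed
    have "gg z0 > 0" using n1 n2 by (simp add: gg_def)
    then show ?thesis using that[of "gg z0"] z0 by (auto simp: gg_def)
  qed
  define \<delta> where "\<delta> = min \<delta>0 (\<rho> / 2)"
  have \<delta>: "\<delta> > 0" "\<delta> \<le> \<delta>0" "\<delta> \<le> \<rho> / 2" using \<delta>0(1) \<rho> by (auto simp: \<delta>_def)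
  obtain e1' where e1': "e1' > 0" "\<And>s p q. s \<in> {0..1} \<Longrightarrow> dist p q < e1' \<Longrightarrow> dist (\<phi> s p) (\<phi> s q) < \<delta> / 3"
    using flow_unif_space[OF cpt fl, of "\<delta> / 3"] \<delta> by auto
  define e1 where "e1 = min e1' (min (\<delta> / 3) (\<epsilon> / 8))"
  have e1: "e1 > 0" "e1 \<le> e1'" "e1 \<le> \<delta> / 3" "e1 \<le> \<epsilon> / 8"
    using e1'(1) \<delta>(1) \<epsilon> by (auto simp: e1_def)
  obtain d0 where d0: "d0 > 0" "\<And>\<xi>. pseudo_traj \<phi> d0 \<xi> \<Longrightarrow> \<exists>x h. h \<in> Rep \<and> (\<forall>t. dist (\<xi> t) (\<phi> (h t) x) < e1)"
    using os e1(1) unfolding oriented_shadowing_def by blast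
  define d where "d = min d0 (\<delta> / 3)"
  have d: "d > 0" "d \<le> d0" "d \<le> \<delta> / 3" using d0(1) \<delta>(1) by (auto simp: d_def)
  show "\<exists>d>0. \<forall>\<xi>. pseudo_traj \<phi> d \<xi> \<longrightarrow> (\<exists>x h. h \<in> Rep_eps \<epsilon> \<and> (\<forall>t. dist (\<xi> t) (\<phi> (h t) x) < \<epsilon>))"
  proof (intro exI[of _ d] conjI allI impI)
    fix \<xi> assume pt: "pseudo_traj \<phi> d \<xi>"
    then have pt0: "pseudo_traj \<phi> d0 \<xi>" using d(2) unfolding pseudo_traj_def by (meson less_le_trans)
    have ptd: "\<And>t s. s \<in> {0..1} \<Longrightarrow> dist (\<xi> (t + s)) (\<phi> s (\<xi> t)) < d"
      using pt unfolding pseudo_traj_def by blast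
    obtain x h where hR: "h \<in> Rep" and sh: "\<And>t. dist (\<xi> t) (\<phi> (h t) x) < e1"
      using d0(2)[OF pt0] by blast
    have hc: "continuous_on UNIV h" and hm: "strict_mono h" and hs: "surj h" using rep_props[OF hR] by auto
    have hle: "h s \<le> h t \<longleftrightarrow> s \<le> t" for s t using hm by (simp add: strict_mono_less_eq)
    have hlt: "h s < h t \<longleftrightarrow> s < t" for s t using hm by (simp add: strict_mono_less)
    define y where "y t = \<phi> (h t) x" for t
    have ycont: "continuous_on UNIV y" unfolding y_def by (rule flow_cont_t[OF fl hc])
    have yshift: "y t = \<phi> (h t - h t') (y t')" for t t'
      unfolding y_def using flow_add[OF fl, of "h t - h t'" "h t'" x] by simp
    have yinv: "\<phi> u x = y (inv h u)" for u unfolding y_def by (simp add: surj_f_inv_f[OF hs])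
    have shy: "dist (\<xi> t) (y t) < e1" for t using sh by (simp add: y_def)
    have F1: "dist p (y t) < \<eta>" if "p \<in> S1" "dist p (y t') < \<rho>" "t' \<le> t" for p t t'
      using stab[OF that(1,2), of "h t - h t'"] that(3) hle[of t' t] yshift[of t t'] by simp
    have F2: "dist p (y t) < \<eta>" if "p \<in> S2" "dist p (y t') < \<rho>" "t \<le> t'" for p t t'
      using unst[OF that(1,2), of "h t - h t'"] that(3) hle[of t t'] yshift[of t t'] by simp
    have S12: "S1 \<inter> S2 = {}" "S1 \<subseteq> S" "S2 \<subseteq> S" "S = S1 \<union> S2" by (auto simp: S1_def S2_def)
    have uniq: "p = q" if "p \<in> S" "q \<in> S" "dist p z < \<eta>" "dist q z < \<eta>" for p q z
    proof (rule ccontr)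
      assume "p \<noteq> q"
      then have "2 * \<eta> \<le> dist p q" using sep that by auto
      moreover have "dist p q \<le> dist p z + dist q z" by (rule dist_triangle2)
      ultimately show False using that by simp
    qed
    define L where "L = {t. \<exists>q\<in>S2. \<exists>t'. t < t' \<and> dist q (y t') < \<rho>}"
    define R where "R = {t. \<exists>p\<in>S1. \<exists>t'. t' < t \<and> dist p (y t') < \<rho>}"
    have Lnear: "\<exists>q\<in>S2. dist q (y t) < \<eta>" if "t \<in> L" for t
    proof -
      obtain q t' where "q \<in> S2" "t < t'" "dist q (y t') < \<rho>" using \<open>t \<in> L\<close> unfolding L_def by blast
      then show ?thesis using F2[of q t' t] by auto
    qed
    have Rnear: "\<exists>p\<in>S1. dist p (y t) < \<eta>" if "t \<in> R" for t
    proof -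
      obtain p t' where "p \<in> S1" "t' < t" "dist p (y t') < \<rho>" using \<open>t \<in> R\<close> unfolding R_def by blast
      then show ?thesis using F1[of p t' t] by auto
    qed
    have Ldown: "s \<in> L" if "t \<in> L" "s \<le> t" for s t
    proof -
      obtain q t' where "q \<in> S2" "t < t'" "dist q (y t') < \<rho>" using \<open>t \<in> L\<close> unfolding L_def by blast
      then show ?thesis using \<open>s \<le> t\<close> unfolding L_def by (intro CollectI bexI[of _ q] exI[of _ t']) auto
    qed
    have Rup: "s \<in> R" if "t \<in> R" "t \<le> s" for s t
    proof -
      obtain p t' where "p \<in> S1" "t' < t" "dist p (y t') < \<rho>" using \<open>t \<in> R\<close> unfolding R_def by blast
      then show ?thesis using \<open>t \<le> s\<close> unfolding R_def by (intro CollectI bexI[of _ p] exI[of _ t']) auto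
    qed
    have Lopen: "\<exists>t'>t. t' \<in> L" if "t \<in> L" for t
    proof -
      obtain q t' where "q \<in> S2" "t < t'" "dist q (y t') < \<rho>" using \<open>t \<in> L\<close> unfolding L_def by blast
      then show ?thesis unfolding L_def by (intro exI[of _ "(t + t') / 2"] conjI CollectI bexI[of _ q] exI[of _ t']) auto
    qed
    have Ropen: "\<exists>t'<t. t' \<in> R" if "t \<in> R" for t
    proof -
      obtain p t' where "p \<in> S1" "t' < t" "dist p (y t') < \<rho>" using \<open>t \<in> R\<close> unfolding R_def by blast
      then show ?thesis unfolding R_def by (intro exI[of _ "(t + t') / 2"] conjI CollectI bexI[of _ p] exI[of _ t']) auto
    qed
    have LR: "t \<notin> R" if "t \<in> L" for t
    proof
      assume "t \<in> R"
      then obtain p where "p \<in> S1" "dist p (y t) < \<eta>" using Rnear by blast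
      moreover obtain q where "q \<in> S2" "dist q (y t) < \<eta>" using Lnear[OF \<open>t \<in> L\<close>] by blast
      ultimately show False using uniq[of p q "y t"] S12 by auto
    qed
    have good: "\<rho> \<le> dist p (y t)" if "t \<notin> L" "t \<notin> R" "p \<in> S" for t p
    proof (rule ccontr)
      assume "\<not> \<rho> \<le> dist p (y t)"
      then have tO: "t \<in> {s. dist p (y s) < \<rho>}" by simp
      have "open {s. dist p (y s) < \<rho>}"
        by (intro open_Collect_less continuous_intros ycont)
      then obtain e where e: "e > 0" "ball t e \<subseteq> {s. dist p (y s) < \<rho>}"
        using tO open_contains_ball by blast
      have "t - e/2 \<in> ball t e" "t + e/2 \<in> ball t e" using e by (auto simp: dist_real_def)
      then have "dist p (y (t - e/2)) < \<rho>" "dist p (y (t + e/2)) < \<rho>" using e(2) by blast+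
      note ee = this
      have "p \<in> S1 \<or> p \<in> S2" using that(3) S12(4) by blast
      then show False
      proof
        assume "p \<in> S1"
        then have "t \<in> R" unfolding R_def using ee(1) e(1)
          by (intro CollectI bexI[of _ p] exI[of _ "t - e/2"]) auto
        then show False using that by blast
      next
        assume "p \<in> S2"
        then have "t \<in> L" unfolding L_def using ee(2) e(1)
          by (intro CollectI bexI[of _ p] exI[of _ "t + e/2"]) auto
        then show False using that by blast
      qed
    qed
    have fb: "\<bar>h (u + w) - h u - w\<bar> < a"
      if w: "0 \<le> w" "w \<le> 1" and gd: "\<And>s p. 0 \<le> s \<Longrightarrow> s \<le> w \<Longrightarrow> p \<in> S \<Longrightarrow> \<rho> \<le> dist p (y (u + s))" for u w
    proof (rule ccontr)
      define \<tau> where "\<tau> s = h (u + s) - h u - s" for s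
      assume "\<not> \<bar>h (u + w) - h u - w\<bar> < a"
      then have aw: "a \<le> \<bar>\<tau> w\<bar>" by (simp add: \<tau>_def)
      have hu: "continuous_on UNIV (\<lambda>s. h (u + s))"
      proof -
        have "continuous_on UNIV (\<lambda>s::real. u + s)" by (intro continuous_intros)
        then show ?thesis
          using continuous_on_compose[of UNIV "\<lambda>s. u + s" h] continuous_on_subset[OF hc] by (simp add: comp_def)
      qed
      have "continuous_on {0..w} (\<lambda>s. \<bar>\<tau> s\<bar>)" unfolding \<tau>_def
        by (intro continuous_intros continuous_on_subset[OF hu]) auto
      moreover have "\<bar>\<tau> 0\<bar> \<le> a" using a by (simp add: \<tau>_def)
      ultimately obtain s0 where s0: "0 \<le> s0" "s0 \<le> w" "\<bar>\<tau> s0\<bar> = a"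
        using IVT'[of "\<lambda>s. \<bar>\<tau> s\<bar>" 0 a w] aw w by auto
      define z where "z = \<phi> s0 (y u)"
      have ez: "y (u + s0) = \<phi> (\<tau> s0) z"
      proof -
        have "\<phi> (\<tau> s0) z = \<phi> (\<tau> s0 + (s0 + h u)) x"
          unfolding z_def y_def by (simp add: flow_add[OF fl])
        also have "\<tau> s0 + (s0 + h u) = h (u + s0)" by (simp add: \<tau>_def)
        finally show ?thesis by (simp add: y_def)
      qed
      have s01: "s0 \<in> {0..1}" using s0 w by auto
      have "dist (y (u + s0)) z \<le> dist (y (u + s0)) (\<xi> (u + s0)) + dist (\<xi> (u + s0)) z"
        by (rule dist_triangle)
      also have "dist (\<xi> (u + s0)) z \<le> dist (\<xi> (u + s0)) (\<phi> s0 (\<xi> u)) + dist (\<phi> s0 (\<xi> u)) z"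
        by (rule dist_triangle)
      finally have "dist (y (u + s0)) z \<le> dist (y (u + s0)) (\<xi> (u + s0)) + (dist (\<xi> (u + s0)) (\<phi> s0 (\<xi> u)) + dist (\<phi> s0 (\<xi> u)) z)"
        by simp
      moreover have "dist (y (u + s0)) (\<xi> (u + s0)) < e1" using shy[of "u + s0"] by (simp add: dist_commute)
      moreover have "dist (\<xi> (u + s0)) (\<phi> s0 (\<xi> u)) < d" by (rule ptd[OF s01])
      moreover have "dist (\<phi> s0 (\<xi> u)) z < \<delta> / 3"
        unfolding z_def using e1'(2)[OF s01, of "\<xi> u" "y u"] shy[of u] e1(2) by simp
      ultimately have dz: "dist (y (u + s0)) z < \<delta>" using e1(3) d(3) by linarith
      have zK: "z \<in> K" unfolding K_def
      proof (intro CollectI ballI)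
        fix p assume "p \<in> S"
        then have "\<rho> \<le> dist p (y (u + s0))" using gd s0 by auto
        moreover have "dist p (y (u + s0)) \<le> dist p z + dist (y (u + s0)) z" by (rule dist_triangle2)
        ultimately show "\<rho> / 2 \<le> dist p z" using dz \<delta>(3) by linarith
      qed
      have "\<tau> s0 = a \<or> \<tau> s0 = - a" using s0(3) by linarith
      then have "\<delta>0 \<le> dist (\<phi> (\<tau> s0) z) z" using \<delta>0(2)[OF zK] by auto
      then show False using dz ez \<delta>(2) by simp
    qed
    have core: "\<exists>x h. h \<in> Rep_eps \<epsilon> \<and> (\<forall>t. dist (\<xi> t) (\<phi> (h t) x) < \<epsilon>)"
      if c1: "\<And>u v. u \<le> v \<Longrightarrow> c u \<le> c v \<and> c v - c u \<le> v - u"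
        and c2: "\<And>t. c t \<notin> L \<and> c t \<notin> R"
        and c3: "\<And>t s. c t < t \<Longrightarrow> c t < s \<Longrightarrow> s \<in> R"
        and c4: "\<And>t s. t < c t \<Longrightarrow> s < c t \<Longrightarrow> s \<in> L" for c
    proof -
      define g where "g t = h (c t) + (t - c t)" for t
      have gclose: "dist (\<xi> t) (\<phi> (g t) x) < e1 + 2 * \<eta>" for t
      proof (cases "c t" t rule: linorder_cases)
        case equal
        then show ?thesis using sh[of t] \<eta> by (simp add: g_def)
      next
        case less
        define u where "u = g t"
        define ts where "ts = inv h u"
        have hts: "h ts = u" unfolding ts_def by (simp add: surj_f_inv_f[OF hs])
        have "h (c t) < u" using less by (simp add: u_def g_def)
        then have cts: "c t < ts" using hts hle[of ts "c t"] by linarith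
        have "ts \<in> R" by (rule c3[OF less cts])
        then obtain p t' where p: "p \<in> S1" "t' < ts" "dist p (y t') < \<rho>" unfolding R_def by blast
        have "t \<in> R" by (rule c3[OF less less])
        then obtain p' t'' where p': "p' \<in> S1" "t'' < t" "dist p' (y t'') < \<rho>" unfolding R_def by blast
        have "dist p (y (max ts t)) < \<eta>" by (rule F1[OF p(1,3)]) (use p(2) in auto)
        moreover have "dist p' (y (max ts t)) < \<eta>" by (rule F1[OF p'(1,3)]) (use p'(2) in auto)
        ultimately have "p = p'" using uniq S12 p(1) p'(1) by blast
        have d1: "dist p (y ts) < \<eta>" by (rule F1[OF p(1,3)]) (use p(2) in auto)
        have d2: "dist p (y t) < \<eta>" unfolding \<open>p = p'\<close> by (rule F1[OF p'(1,3)]) (use p'(2) in auto)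
        have "\<phi> (g t) x = y ts" using hts by (simp add: y_def u_def)
        moreover have "dist (\<xi> t) (y ts) \<le> dist (\<xi> t) (y t) + (dist p (y t) + dist p (y ts))"
          using dist_triangle[of "\<xi> t" "y ts" "y t"] dist_triangle3[of "y t" "y ts" p] by linarith
        ultimately show ?thesis using shy[of t] d1 d2 by simp
      next
        case greater
        define u where "u = g t"
        define ts where "ts = inv h u"
        have hts: "h ts = u" unfolding ts_def by (simp add: surj_f_inv_f[OF hs])
        have "u < h (c t)" using greater by (simp add: u_def g_def)
        then have cts: "ts < c t" using hts hle[of "c t" ts] by linarith
        have "ts \<in> L" by (rule c4[OF greater cts])
        then obtain p t' where p: "p \<in> S2" "ts < t'" "dist p (y t') < \<rho>" unfolding L_def by blast
        have "t \<in> L" by (rule c4[OF greater greater])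
        then obtain p' t'' where p': "p' \<in> S2" "t < t''" "dist p' (y t'') < \<rho>" unfolding L_def by blast
        have "dist p (y (min ts t)) < \<eta>" by (rule F2[OF p(1,3)]) (use p(2) in auto)
        moreover have "dist p' (y (min ts t)) < \<eta>" by (rule F2[OF p'(1,3)]) (use p'(2) in auto)
        ultimately have "p = p'" using uniq S12 p(1) p'(1) by blast
        have d1: "dist p (y ts) < \<eta>" by (rule F2[OF p(1,3)]) (use p(2) in auto)
        have d2: "dist p (y t) < \<eta>" unfolding \<open>p = p'\<close> by (rule F2[OF p'(1,3)]) (use p'(2) in auto)
        have "\<phi> (g t) x = y ts" using hts by (simp add: y_def u_def)
        moreover have "dist (\<xi> t) (y ts) \<le> dist (\<xi> t) (y t) + (dist p (y t) + dist p (y ts))"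
          using dist_triangle[of "\<xi> t" "y ts" "y t"] dist_triangle3[of "y t" "y ts" p] by linarith
        ultimately show ?thesis using shy[of t] d1 d2 by simp
      qed
      have gslope: "\<bar>g v - g u - (v - u)\<bar> < a" if "u \<le> v" "v \<le> u + 1" for u v
      proof -
        have cc: "c u \<le> c v" "c v - c u \<le> v - u" using c1[OF that(1)] by auto
        have "\<bar>h (c u + (c v - c u)) - h (c u) - (c v - c u)\<bar> < a"
        proof (rule fb)
          show "0 \<le> c v - c u" "c v - c u \<le> 1" using cc that by auto
          fix s p assume sp: "0 \<le> s" "s \<le> c v - c u" "p \<in> S"
          have "c u + s \<notin> L"
          proof
            assume "c u + s \<in> L"
            then have "c u \<in> L" using Ldown sp(1) by auto
            then show False using c2 by blast
          qed
          moreover have "c u + s \<notin> R"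
          proof
            assume "c u + s \<in> R"
            then have "c v \<in> R" using Rup sp(2) by auto
            then show False using c2 by blast
          qed
          ultimately show "\<rho> \<le> dist p (y (c u + s))" using good sp(3) by blast
        qed
        then show ?thesis by (simp add: g_def algebra_simps)
      qed
      define v where "v k = g (of_int k)" for k
      have vs: "1 - a < v (k + 1) - v k" "v (k + 1) - v k < 1 + a" for k
        using gslope[of "of_int k" "of_int k + 1"] by (auto simp: v_def)
      define h' where "h' = pl v"
      have h'R: "h' \<in> Rep_eps \<epsilon>" unfolding h'_def
      proof (rule slope_rep_eps[where c = a])
        show "0 < a" "a < 1" "a \<le> \<epsilon>" using a by auto
        fix p q :: real assume "q < p"
        show "(1 - a) * (p - q) < pl v p - pl v q" by (rule pl_lower[where v=v, OF vs(1) \<open>q < p\<close>])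
        show "pl v p - pl v q < (1 + a) * (p - q)" by (rule pl_upper[where v=v, OF vs(2) \<open>q < p\<close>])
      qed
      have hg: "\<bar>h' t - g t\<bar> < 2 * a" for t
      proof -
        define k where "k = \<lfloor>t\<rfloor>"
        define f where "f = t - of_int k"
        have f: "0 \<le> f" "f \<le> 1" unfolding f_def k_def by linarith+
        have h't: "h' t = v k + f * (v (k + 1) - v k)" unfolding h'_def pl_def k_def f_def by simp
        have gt: "\<bar>g t - v k - f\<bar> < a"
          using gslope[of "of_int k" t] f unfolding v_def f_def by auto
        have "\<bar>f * (v (k + 1) - v k - 1)\<bar> \<le> \<bar>v (k + 1) - v k - 1\<bar>"
          using f by (simp add: abs_mult mult_left_le_one_le)
        moreover have "\<bar>v (k + 1) - v k - 1\<bar> < a" using vs[of k] by linarith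
        moreover have "h' t - g t = f * (v (k + 1) - v k - 1) - (g t - v k - f)"
          unfolding h't by (simp add: algebra_simps)
        ultimately show ?thesis using gt by linarith
      qed
      show ?thesis
      proof (intro exI[of _ x] exI[of _ h'] conjI allI h'R)
        fix t
        have "\<phi> (h' t) x = \<phi> (h' t - g t) (\<phi> (g t) x)"
          using flow_add[OF fl, of "h' t - g t" "g t" x] by simp
        moreover have "dist (\<phi> (h' t - g t) (\<phi> (g t) x)) (\<phi> (g t) x) < \<epsilon> / 4"
          using a0(2) hg[of t] a by auto
        moreover have "dist (\<xi> t) (\<phi> (h' t) x) \<le> dist (\<xi> t) (\<phi> (g t) x) + dist (\<phi> (h' t) x) (\<phi> (g t) x)"
          by (rule dist_triangle2)
        ultimately show "dist (\<xi> t) (\<phi> (h' t) x) < \<epsilon>"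
          using gclose[of t] e1(4) \<eta>(2) \<epsilon> by simp
      qed
    qed
    have finS1: "finite S1" "finite S2" using finS S12 by (auto intro: finite_subset)
    have constshadow: "\<exists>x h. h \<in> Rep_eps \<epsilon> \<and> (\<forall>t. dist (\<xi> t) (\<phi> (h t) x) < \<epsilon>)"
      if "q \<in> S" "\<And>t. dist q (y t) < \<eta>" for q
    proof (intro exI[of _ q] exI[of _ "\<lambda>t. t"] conjI allI id_rep_eps[OF \<epsilon>])
      fix t
      have "dist (\<xi> t) q \<le> dist (\<xi> t) (y t) + dist q (y t)" by (rule dist_triangle2)
      then show "dist (\<xi> t) (\<phi> t q) < \<epsilon>" using singS[OF that(1)] shy[of t] that(2)[of t] e1(4) \<eta>(2) \<epsilon> by simp
    qed
    show "\<exists>x h. h \<in> Rep_eps \<epsilon> \<and> (\<forall>t. dist (\<xi> t) (\<phi> (h t) x) < \<epsilon>)"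
    proof (cases "L = UNIV")
      case True
      have "\<exists>q\<in>S2. \<forall>b. \<exists>t'. b \<le> t' \<and> dist q (y t') < \<rho>"
      proof (rule ccontr)
        assume neg: "\<not> (\<exists>q\<in>S2. \<forall>b. \<exists>t'. b \<le> t' \<and> dist q (y t') < \<rho>)"
        have "\<forall>q\<in>S2. \<exists>b. \<forall>b'. b \<le> b' \<longrightarrow> (\<forall>t'. dist q (y t') < \<rho> \<longrightarrow> t' < b')"
        proof
          fix q assume "q \<in> S2"
          then obtain b where b: "\<forall>t'. b \<le> t' \<longrightarrow> \<not> dist q (y t') < \<rho>" using neg by blast
          show "\<exists>b. \<forall>b'. b \<le> b' \<longrightarrow> (\<forall>t'. dist q (y t') < \<rho> \<longrightarrow> t' < b')"
          proof (intro exI[of _ b] allI impI)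
            fix b' t' assume "b \<le> b'" "dist q (y t') < \<rho>"
            then have "\<not> b \<le> t'" using b by blast
            then show "t' < b'" using \<open>b \<le> b'\<close> by linarith
          qed
        qed
        then obtain b where b: "\<forall>q\<in>S2. \<forall>t'. dist q (y t') < \<rho> \<longrightarrow> t' < b"
          using finite_bound[OF finS1(2), where Q = "\<lambda>q b. \<forall>t'. dist q (y t') < \<rho> \<longrightarrow> t' < b"] by blast
        have "b \<in> L" using True by simp
        then obtain q t' where qt: "q \<in> S2" "b < t'" "dist q (y t') < \<rho>" unfolding L_def by blast
        then have "t' < b" using b by blast
        then show False using qt(2) by linarith
      qed
      then obtain q where q: "q \<in> S2" "\<And>b. \<exists>t'. b \<le> t' \<and> dist q (y t') < \<rho>" by blast
      have "dist q (y t) < \<eta>" for t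
      proof -
        obtain t' where tt: "t \<le> t'" "dist q (y t') < \<rho>" using q(2) by blast
        show ?thesis by (rule F2[OF q(1) tt(2) tt(1)])
      qed
      then show ?thesis using constshadow[of q] q(1) S12(3) by blast
    next
      case LnU: False
      show ?thesis
      proof (cases "R = UNIV")
        case True
        have "\<exists>p\<in>S1. \<forall>b. \<exists>t'. t' \<le> -b \<and> dist p (y t') < \<rho>"
        proof (rule ccontr)
          assume neg: "\<not> (\<exists>p\<in>S1. \<forall>b. \<exists>t'. t' \<le> -b \<and> dist p (y t') < \<rho>)"
          have "\<forall>p\<in>S1. \<exists>b. \<forall>b'. b \<le> b' \<longrightarrow> (\<forall>t'. dist p (y t') < \<rho> \<longrightarrow> -b' < t')"
          proof
            fix p assume "p \<in> S1"
            then obtain b where b: "\<forall>t'. t' \<le> -b \<longrightarrow> \<not> dist p (y t') < \<rho>" using neg by blast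
            show "\<exists>b. \<forall>b'. b \<le> b' \<longrightarrow> (\<forall>t'. dist p (y t') < \<rho> \<longrightarrow> -b' < t')"
            proof (intro exI[of _ b] allI impI)
              fix b' t' assume "b \<le> b'" "dist p (y t') < \<rho>"
              then have "\<not> t' \<le> -b" using b by blast
              then show "-b' < t'" using \<open>b \<le> b'\<close> by linarith
            qed
          qed
          then obtain b where b: "\<forall>p\<in>S1. \<forall>t'. dist p (y t') < \<rho> \<longrightarrow> -b < t'"
            using finite_bound[OF finS1(1), where Q = "\<lambda>p b. \<forall>t'. dist p (y t') < \<rho> \<longrightarrow> -b < t'"] by blast
          have "-b \<in> R" using True by simp
          then obtain p t' where pt: "p \<in> S1" "t' < -b" "dist p (y t') < \<rho>" unfolding R_def by blast
          then have "-b < t'" using b by blast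
          then show False using pt(2) by linarith
        qed
        then obtain p where p: "p \<in> S1" "\<And>b. \<exists>t'. t' \<le> -b \<and> dist p (y t') < \<rho>" by blast
        have "dist p (y t) < \<eta>" for t
        proof -
          obtain t' where tt: "t' \<le> - (-t)" "dist p (y t') < \<rho>" using p(2) by blast
          show ?thesis by (rule F1[OF p(1) tt(2)]) (use tt(1) in simp)
        qed
        then show ?thesis using constshadow[of p] p(1) S12(2) by blast
      next
        case RnU: False
        obtain l0 where l0: "l0 \<notin> L" using LnU by auto
        obtain r0 where r0: "r0 \<notin> R" using RnU by auto
        have Lbd: "t \<le> l0" if "t \<in> L" for t
        proof (rule ccontr)
          assume "\<not> t \<le> l0"
          then have "l0 \<in> L" using Ldown[OF that] by simp
          then show False using l0 by blast
        qed
        have Rbd: "r0 \<le> t" if "t \<in> R" for t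
        proof (rule ccontr)
          assume "\<not> r0 \<le> t"
          then have "r0 \<in> R" using Rup[OF that] by simp
          then show False using r0 by blast
        qed
        have bL: "bdd_above L" unfolding bdd_above_def using Lbd by blast
        have bR: "bdd_below R" unfolding bdd_below_def using Rbd by blast
        define \<alpha> where "\<alpha> = Sup L"
        define \<beta> where "\<beta> = Inf R"
        have Lf: "(\<forall>t. \<alpha> \<le> t \<longrightarrow> t \<notin> L) \<and> (\<forall>t. t < \<alpha> \<longrightarrow> t \<in> L)" if "L \<noteq> {}"
        proof (intro conjI allI impI)
          fix t assume "\<alpha> \<le> t"
          show "t \<notin> L"
          proof
            assume "t \<in> L"
            then obtain t' where "t < t'" "t' \<in> L" using Lopen by blast
            then have "t' \<le> \<alpha>" unfolding \<alpha>_def using bL by (intro cSup_upper)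
            then show False using \<open>t < t'\<close> \<open>\<alpha> \<le> t\<close> by simp
          qed
        next
          fix t assume "t < \<alpha>"
          then obtain t' where "t' \<in> L" "t < t'" unfolding \<alpha>_def using less_cSup_iff[OF \<open>L \<noteq> {}\<close> bL] by blast
          then show "t \<in> L" using Ldown by auto
        qed
        have Rf: "(\<forall>t. t \<le> \<beta> \<longrightarrow> t \<notin> R) \<and> (\<forall>t. \<beta> < t \<longrightarrow> t \<in> R)" if "R \<noteq> {}"
        proof (intro conjI allI impI)
          fix t assume "t \<le> \<beta>"
          show "t \<notin> R"
          proof
            assume "t \<in> R"
            then obtain t' where "t' < t" "t' \<in> R" using Ropen by blast
            then have "\<beta> \<le> t'" unfolding \<beta>_def using bR by (intro cInf_lower)
            then show False using \<open>t' < t\<close> \<open>t \<le> \<beta>\<close> by simp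
          qed
        next
          fix t assume "\<beta> < t"
          then obtain t' where "t' \<in> R" "t' < t" unfolding \<beta>_def using cInf_less_iff[OF \<open>R \<noteq> {}\<close> bR] by blast
          then show "t \<in> R" using Rup by auto
        qed
        show ?thesis
        proof (cases "L = {}")
          case L0: True
          show ?thesis
          proof (cases "R = {}")
            case R0: True
            show ?thesis by (rule core[of "\<lambda>t. t"]) (use L0 R0 in auto)
          next
            case R1: False
            note RF = Rf[OF R1]
            show ?thesis
            proof (rule core[of "\<lambda>t. min \<beta> t"])
              show "\<And>u v. u \<le> v \<Longrightarrow> min \<beta> u \<le> min \<beta> v \<and> min \<beta> v - min \<beta> u \<le> v - u"
                by (auto simp: min_def)
              show "\<And>t. min \<beta> t \<notin> L \<and> min \<beta> t \<notin> R" using L0 RF by auto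
              show "\<And>t s. min \<beta> t < t \<Longrightarrow> min \<beta> t < s \<Longrightarrow> s \<in> R"
                using RF by (auto simp: min_def split: if_splits)
              show "\<And>t s. t < min \<beta> t \<Longrightarrow> s < min \<beta> t \<Longrightarrow> s \<in> L" by auto
            qed
          qed
        next
          case L1: False
          note LF = Lf[OF L1]
          show ?thesis
          proof (cases "R = {}")
            case R0: True
            show ?thesis
            proof (rule core[of "\<lambda>t. max \<alpha> t"])
              show "\<And>u v. u \<le> v \<Longrightarrow> max \<alpha> u \<le> max \<alpha> v \<and> max \<alpha> v - max \<alpha> u \<le> v - u"
                by (auto simp: max_def)
              show "\<And>t. max \<alpha> t \<notin> L \<and> max \<alpha> t \<notin> R" using R0 LF by auto
              show "\<And>t s. t < max \<alpha> t \<Longrightarrow> s < max \<alpha> t \<Longrightarrow> s \<in> L"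
                using LF by (auto simp: max_def split: if_splits)
              show "\<And>t s. max \<alpha> t < t \<Longrightarrow> max \<alpha> t < s \<Longrightarrow> s \<in> R" by auto
            qed
          next
            case R1: False
            note RF = Rf[OF R1]
            have ab: "\<alpha> \<le> \<beta>"
            proof (rule ccontr)
              assume "\<not> \<alpha> \<le> \<beta>"
              then have "(\<alpha> + \<beta>) / 2 \<in> L" "(\<alpha> + \<beta>) / 2 \<in> R" using LF RF by auto
              then show False using LR by blast
            qed
            show ?thesis
            proof (rule core[of "\<lambda>t. max \<alpha> (min \<beta> t)"])
              show "\<And>u v. u \<le> v \<Longrightarrow> max \<alpha> (min \<beta> u) \<le> max \<alpha> (min \<beta> v) \<and> max \<alpha> (min \<beta> v) - max \<alpha> (min \<beta> u) \<le> v - u"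
                by (auto simp: max_def min_def)
              show "\<And>t. max \<alpha> (min \<beta> t) \<notin> L \<and> max \<alpha> (min \<beta> t) \<notin> R"
                using LF RF ab by (auto simp: max_def min_def)
              show "\<And>t s. t < max \<alpha> (min \<beta> t) \<Longrightarrow> s < max \<alpha> (min \<beta> t) \<Longrightarrow> s \<in> L"
                using LF ab by (auto simp: max_def min_def split: if_splits)
              show "\<And>t s. max \<alpha> (min \<beta> t) < t \<Longrightarrow> max \<alpha> (min \<beta> t) < s \<Longrightarrow> s \<in> R"
                using RF ab by (auto simp: max_def min_def split: if_splits)
            qed
          qed
        qed
      qed
    qed
  qed (use d in auto)
qed

theorem theorem1p1:
  fixes \<phi> :: "real \<Rightarrow> 'a::metric_space \<Rightarrow> 'a"
  assumes "compact (UNIV :: 'a set)"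
    and "is_flow \<phi>"
    and "finite (Sing \<phi>)"
    and "\<forall>p\<in>Sing \<phi>. lyap_stable \<phi> p \<or> lyap_unstable \<phi> p"
  shows "oriented_shadowing \<phi> \<longleftrightarrow> standard_shadowing \<phi>"
proof
  assume "oriented_shadowing \<phi>"
  then show "standard_shadowing \<phi>" by (rule oriented_imp_standard[OF assms])
next
  assume "standard_shadowing \<phi>"
  note ss = this
  show "oriented_shadowing \<phi>"
    unfolding oriented_shadowing_def
  proof (intro allI impI)
    fix e :: real assume "e > 0"
    then obtain d where d: "d > 0" "\<And>\<xi>. pseudo_traj \<phi> d \<xi> \<Longrightarrow> \<exists>x h. h \<in> Rep_eps e \<and> (\<forall>t. dist (\<xi> t) (\<phi> (h t) x) < e)"
      using ss unfolding standard_shadowing_def by blast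
    show "\<exists>d>0. \<forall>\<xi>. pseudo_traj \<phi> d \<xi> \<longrightarrow> (\<exists>x h. h \<in> Rep \<and> (\<forall>t. dist (\<xi> t) (\<phi> (h t) x) < e))"
    proof (intro exI[of _ d] conjI allI impI)
      fix \<xi> assume "pseudo_traj \<phi> d \<xi>"
      then obtain x h where "h \<in> Rep_eps e" "\<forall>t. dist (\<xi> t) (\<phi> (h t) x) < e" using d(2) by blast
      moreover have "h \<in> Rep" using \<open>h \<in> Rep_eps e\<close> by (simp add: Rep_eps_def)
      ultimately show "\<exists>x h. h \<in> Rep \<and> (\<forall>t. dist (\<xi> t) (\<phi> (h t) x) < e)" by blast
    qed (rule d(1))
  qed
qed


end
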